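(* Let $\mathcal{H}_Q$ and $\mathcal{H}_A$ be finite-dimensional Hilbert spaces with $\dim\mathcal{H}_Q = D_Q \le D_A = \dim\mathcal{H}_A$, and let $U_1,\ldots,U_K$ be unitary operators on $\mathcal{H}_Q$ that mutually commute. Then for every unit vector $|\psi_{QA}\rangle \in \mathcal{H}_Q\otimes\mathcal{H}_A$ (possibly entangled) there exist unit vectors $|\xi\rangle\in\mathcal{H}_Q$, $|\chi\rangle\in\mathcal{H}_A$ and a unitary operator $V$ on $\mathcal{H}_Q\otimes\mathcal{H}_A$, independent of $j$, such that for every $j=1,\ldots,K$, $$V\,(U_j\otimes \mathbb{1}_A)\,(|\xi\rangle\otimes|\chi\rangle) = (U_j\otimes\mathbb{1}_A)\,|\psi_{QA}\rangle ,$$ where $\mathbb{1}_A$ is the identity on $\mathcal{H}_A$. *)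

theory Defs
  imports Complex_Main
begin

text \<open>Finite-dimensional complex Hilbert spaces are modelled as coordinate spaces
  \<open>'i \<Rightarrow> complex\<close> over a finite index type \<open>'i\<close> (standard inner product), and
  operators as square matrices \<open>'i \<Rightarrow> 'i \<Rightarrow> complex\<close>.  The tensor product of
  \<open>'q \<Rightarrow> complex\<close> and \<open>'a \<Rightarrow> complex\<close> is \<open>'q \<times> 'a \<Rightarrow> complex\<close>.\<close>

type_synonym 'i cmat = "'i \<Rightarrow> 'i \<Rightarrow> complex"

definition mat_vec :: "'i::finite cmat \<Rightarrow> ('i \<Rightarrow> complex) \<Rightarrow> ('i \<Rightarrow> complex)" where
  "mat_vec M v = (\<lambda>i. \<Sum>j\<in>UNIV. M i j * v j)"

definition mat_mult :: "'i::finite cmat \<Rightarrow> 'i cmat \<Rightarrow> 'i cmat" where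
  "mat_mult M N = (\<lambda>i k. \<Sum>j\<in>UNIV. M i j * N j k)"

definition id_mat :: "'i cmat" where
  "id_mat = (\<lambda>i j. if i = j then 1 else 0)"

definition adjoint :: "'i cmat \<Rightarrow> 'i cmat" where
  "adjoint M = (\<lambda>i j. cnj (M j i))"

definition unitary_mat :: "'i::finite cmat \<Rightarrow> bool" where
  "unitary_mat M \<longleftrightarrow> mat_mult (adjoint M) M = id_mat \<and> mat_mult M (adjoint M) = id_mat"

definition unit_vector :: "('i::finite \<Rightarrow> complex) \<Rightarrow> bool" where
  "unit_vector v \<longleftrightarrow> (\<Sum>i\<in>UNIV. (cmod (v i))\<^sup>2) = 1"

definition tensor_mat :: "'q cmat \<Rightarrow> 'a cmat \<Rightarrow> ('q \<times> 'a) cmat" where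
  "tensor_mat M N = (\<lambda>(i, a) (j, b). M i j * N a b)"

definition tensor_vec :: "('q \<Rightarrow> complex) \<Rightarrow> ('a \<Rightarrow> complex) \<Rightarrow> ('q \<times> 'a \<Rightarrow> complex)" where
  "tensor_vec x y = (\<lambda>(i, a). x i * y a)"

end

theory Submission
  imports Defs "HOL-Analysis.Cartesian_Space" "HOL-Computational_Algebra.Fundamental_Theorem_Algebra"
begin


lemma sum_UNIV_prod: "(\<Sum>z\<in>(UNIV::('a::finite \<times> 'b::finite) set). f z) = (\<Sum>i\<in>UNIV. \<Sum>a\<in>UNIV. f (i,a))"
  by (simp add: sum.cartesian_product)


definition cinner :: "('i::finite \<Rightarrow> complex) \<Rightarrow> ('i \<Rightarrow> complex) \<Rightarrow> complex" where
  "cinner x y = (\<Sum>i\<in>UNIV. cnj (x i) * y i)"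

lemma cinner_sum_right: "cinner u (\<lambda>i. \<Sum>k\<in>S. f k i) = (\<Sum>k\<in>S. cinner u (f k))"
  unfolding cinner_def sum_distrib_left by (rule sum.swap)

lemma cinner_sum_left: "cinner (\<lambda>i. \<Sum>k\<in>S. f k i) u = (\<Sum>k\<in>S. cinner (f k) u)"
  unfolding cinner_def cnj_sum sum_distrib_right by (rule sum.swap)

lemma cinner_scale_right: "cinner u (\<lambda>i. c * v i) = c * cinner u v"
  unfolding cinner_def by (simp add: sum_distrib_left algebra_simps)

lemma cinner_scale_left: "cinner (\<lambda>i. c * v i) u = cnj c * cinner v u"
  unfolding cinner_def by (simp add: sum_distrib_left algebra_simps)

lemma cinner_diff_right: "cinner u (\<lambda>i. v i - w i) = cinner u v - cinner u w"
  unfolding cinner_def by (simp add: sum_subtractf algebra_simps)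

lemma cinner_diff_left: "cinner (\<lambda>i. v i - w i) u = cinner v u - cinner w u"
  unfolding cinner_def by (simp add: sum_subtractf algebra_simps)

lemma cinner_add_right: "cinner u (\<lambda>i. v i + w i) = cinner u v + cinner u w"
  unfolding cinner_def by (simp add: sum.distrib algebra_simps)

lemma cinner_cnj: "cnj (cinner x y) = cinner y x"
  unfolding cinner_def by (simp add: mult.commute)

lemma cinner_self: "cinner v v = of_real (\<Sum>i\<in>UNIV. (cmod (v i))\<^sup>2)"
  unfolding cinner_def of_real_sum by (intro sum.cong refl) (metis complex_norm_square mult.commute)

lemma cinner_self_eq_0: "cinner v v = 0 \<longleftrightarrow> v = (\<lambda>_. 0)"
proof -
  have "cinner v v = 0 \<longleftrightarrow> (\<Sum>i\<in>UNIV. (cmod (v i))\<^sup>2) = 0"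
    unfolding cinner_self of_real_eq_0_iff ..
  also have "\<dots> \<longleftrightarrow> (\<forall>i. (cmod (v i))\<^sup>2 = 0)"
    by (subst sum_nonneg_eq_0_iff) auto
  also have "\<dots> \<longleftrightarrow> v = (\<lambda>_. 0)" by (auto simp: fun_eq_iff)
  finally show ?thesis .
qed

lemma unit_vector_cinner: "unit_vector v \<longleftrightarrow> cinner v v = 1"
  unfolding unit_vector_def cinner_self
  by (metis of_real_1 of_real_eq_iff)

lemma mat_vec_sum: "mat_vec M (\<lambda>i. \<Sum>k\<in>S. f k i) = (\<lambda>i. \<Sum>k\<in>S. mat_vec M (f k) i)"
  unfolding mat_vec_def sum_distrib_left by (rule ext, rule sum.swap)

lemma mat_vec_scale: "mat_vec M (\<lambda>i. c * v i) = (\<lambda>i. c * mat_vec M v i)"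
  unfolding mat_vec_def by (simp add: sum_distrib_left algebra_simps)

lemma mat_vec_add: "mat_vec M (\<lambda>i. v i + w i) = (\<lambda>i. mat_vec M v i + mat_vec M w i)"
  unfolding mat_vec_def by (simp add: sum.distrib algebra_simps)

lemma mat_vec_mult: "mat_vec (mat_mult A B) x = mat_vec A (mat_vec B x)"
  unfolding mat_vec_def mat_mult_def sum_distrib_left sum_distrib_right
  by (rule ext, subst sum.swap) (simp add: algebra_simps)

lemma mat_vec_id: "mat_vec id_mat x = x"
  unfolding mat_vec_def id_mat_def by (simp add: fun_eq_iff if_distrib[where f="\<lambda>c. c * _"] cong: if_cong)

lemma cinner_adjoint: "cinner (mat_vec (Defs.adjoint M) u) v = cinner u (mat_vec M v)"
  unfolding cinner_def mat_vec_def Defs.adjoint_def cnj_sum sum_distrib_left sum_distrib_right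
  by (subst sum.swap) (simp add: algebra_simps)

lemma cinner_tensor:
  "cinner (tensor_vec f g) (tensor_vec f' g') = cinner f f' * cinner g g'"
  unfolding cinner_def tensor_vec_def sum_UNIV_prod
  by (simp add: sum_product algebra_simps)

lemma mat_vec_tensor_id:
  "mat_vec (tensor_mat A id_mat) v = (\<lambda>(q, b). mat_vec A (\<lambda>q'. v (q', b)) q)"
proof -
  have "mat_vec (tensor_mat A id_mat) v (q, b) = mat_vec A (\<lambda>q'. v (q', b)) q" for q b
  proof -
    have "mat_vec (tensor_mat A id_mat) v (q, b) =
       (\<Sum>q'\<in>UNIV. \<Sum>b'\<in>UNIV. A q q' * (if b = b' then 1 else 0) * v (q', b'))"
      unfolding mat_vec_def tensor_mat_def id_mat_def sum_UNIV_prod by simp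
    also have "\<dots> = (\<Sum>q'\<in>UNIV. \<Sum>b'\<in>UNIV. if b = b' then A q q' * v (q', b') else 0)"
      by (intro sum.cong refl) simp
    also have "\<dots> = (\<Sum>q'\<in>UNIV. A q q' * v (q', b))"
      by (simp add: sum.delta)
    finally show ?thesis unfolding mat_vec_def .
  qed
  then show ?thesis by (auto simp: fun_eq_iff)
qed



lemma dep:
  fixes x :: "nat \<Rightarrow> 'q::finite \<Rightarrow> complex"
  assumes m: "CARD('q) < m"
  shows "\<exists>c. (\<exists>i<m. c i \<noteq> 0) \<and> (\<lambda>q. \<Sum>i<m. c i * x i q) = (\<lambda>_. 0)"
proof (cases "inj_on (\<lambda>i. (vec_lambda (x i) :: complex^'q)) {..<m}")
  case True
  let ?y = "\<lambda>i. (vec_lambda (x i) :: complex^'q)"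
  let ?S = "?y ` {..<m}"
  have fin: "finite ?S" by simp
  have card: "card ?S = m" using card_image[OF True] by simp
  have "vec.dim ?S \<le> CARD('q)" using vec.dim_subset[of ?S UNIV] vec_dim_card[where 'n='q and 'a=complex] by simp
  then have "vec.dependent ?S" using m card by (intro vec.dependent_biggerset_general) simp
  then obtain u where u: "\<exists>v\<in>?S. u v \<noteq> 0" "(\<Sum>v\<in>?S. u v *s v) = 0"
    using vec.dependent_finite[OF fin] by blast
  define c where "c i = u (?y i)" for i
  have "(\<Sum>i<m. c i *s ?y i) = 0"
    using u(2) unfolding sum.reindex[OF True] c_def by (simp add: o_def)
  then have "(\<Sum>i<m. c i *s ?y i) $ q = 0" for q by simp
  then have "(\<Sum>i<m. c i * x i q) = 0" for q by (simp add: sum_component)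
  moreover have "\<exists>i<m. c i \<noteq> 0" using u(1) c_def by auto
  ultimately show ?thesis by (intro exI[of _ c]) auto
next
  case False
  then obtain i j where ij: "i < m" "j < m" "i \<noteq> j" "(vec_lambda (x i) :: complex^'q) = vec_lambda (x j)"
    unfolding inj_on_def by auto
  then have xij: "x i = x j" by (metis vec_lambda_inverse UNIV_I)
  define c where "c k = (if k = i then 1 else if k = j then -1 else (0::complex))" for k
  have "(\<Sum>k<m. c k * x k q) = 0" for q
  proof -
    have "(\<Sum>k<m. c k * x k q) = (\<Sum>k<m. (if k = i then x i q else 0) - (if k = j then x j q else 0))"
      by (intro sum.cong refl) (auto simp: c_def ij(3)[symmetric])
    also have "\<dots> = 0" using ij xij by (simp add: sum_subtractf)
    finally show ?thesis .
  qed
  moreover have "c i \<noteq> 0" by (simp add: c_def)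
  ultimately show ?thesis using ij by (intro exI[of _ c]) auto
qed

definition orthonormal :: "nat \<Rightarrow> (nat \<Rightarrow> 'q::finite \<Rightarrow> complex) \<Rightarrow> bool" where
  "orthonormal m e \<longleftrightarrow> (\<forall>k<m. \<forall>l<m. cinner (e k) (e l) = (if k = l then 1 else 0))"

lemma cinner_comb_basis:
  assumes "orthonormal m e" "l < m"
  shows "cinner (e l) (\<lambda>q. \<Sum>i<m. c i * e i q) = c l"
proof -
  have "cinner (e l) (\<lambda>q. \<Sum>i<m. c i * e i q) = (\<Sum>i<m. c i * cinner (e l) (e i))"
    by (simp add: cinner_sum_right cinner_scale_right)
  also have "\<dots> = (\<Sum>i<m. if i = l then c i else 0)"
    using assms unfolding orthonormal_def by (intro sum.cong refl) auto
  also have "\<dots> = c l" using assms(2) by simp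
  finally show ?thesis .
qed

lemma orthonormal_card:
  fixes e :: "nat \<Rightarrow> 'q::finite \<Rightarrow> complex"
  assumes "orthonormal m e"
  shows "m \<le> CARD('q)"
proof (rule ccontr)
  assume "\<not> m \<le> CARD('q)"
  then obtain c where c: "\<exists>i<m. c i \<noteq> 0" "(\<lambda>q. \<Sum>i<m. c i * e i q) = (\<lambda>_. 0)"
    using dep[of m e] by auto
  have "c l = 0" if "l < m" for l
  proof -
    have "c l = cinner (e l) (\<lambda>q. \<Sum>i<m. c i * e i q)" using cinner_comb_basis[OF assms that] by simp
    also have "\<dots> = 0" unfolding c(2) cinner_def by simp
    finally show ?thesis .
  qed
  with c(1) show False by auto
qed



definition subsp :: "('q::finite \<Rightarrow> complex) set \<Rightarrow> bool" where
  "subsp W \<longleftrightarrow> (\<lambda>_. 0) \<in> W \<and> (\<forall>x\<in>W. \<forall>y\<in>W. (\<lambda>i. x i + y i) \<in> W) \<and> (\<forall>c. \<forall>x\<in>W. (\<lambda>i. c * x i) \<in> W)"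

definition invar :: "'q::finite cmat \<Rightarrow> ('q \<Rightarrow> complex) set \<Rightarrow> bool" where
  "invar M W \<longleftrightarrow> (\<forall>x\<in>W. mat_vec M x \<in> W)"

lemma subsp_sum:
  assumes "subsp W" "finite S" "\<And>k. k \<in> S \<Longrightarrow> f k \<in> W"
  shows "(\<lambda>i. \<Sum>k\<in>S. f k i) \<in> W"
  using assms(2,3)
proof (induction S rule: finite_induct)
  case empty then show ?case using assms(1) by (simp add: subsp_def)
next
  case (insert a F)
  then show ?case using assms(1) unfolding subsp_def by simp
qed

definition peval :: "complex poly \<Rightarrow> 'q::finite cmat \<Rightarrow> ('q \<Rightarrow> complex) \<Rightarrow> ('q \<Rightarrow> complex)" where
  "peval p M w = (\<lambda>q. \<Sum>i\<le>degree p. coeff p i * (mat_vec M ^^ i) w q)"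

lemma peval_N:
  assumes "degree p \<le> N"
  shows "peval p M w = (\<lambda>q. \<Sum>i\<le>N. coeff p i * (mat_vec M ^^ i) w q)"
  unfolding peval_def
  by (rule ext, rule sum.mono_neutral_left) (use assms in \<open>auto simp: coeff_eq_0\<close>)

lemma peval_add: "peval (p + r) M w = (\<lambda>q. peval p M w q + peval r M w q)"
proof -
  let ?N = "max (degree p) (degree r)"
  have d: "degree (p + r) \<le> ?N" by (rule degree_add_le) auto
  have d1: "degree p \<le> ?N" and d2: "degree r \<le> ?N" by auto
  show ?thesis
    unfolding peval_N[OF d] peval_N[OF d1] peval_N[OF d2]
    by (simp add: sum.distrib distrib_right)
qed

lemma peval_smult: "peval (smult c p) M w = (\<lambda>q. c * peval p M w q)"
proof -
  have d: "degree (smult c p) \<le> degree p" by (rule degree_smult_le)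
  show ?thesis
    unfolding peval_N[OF d] peval_def
    by (simp add: sum_distrib_left mult.assoc)
qed

lemma peval_shift: "peval (pCons 0 p) M w = mat_vec M (peval p M w)"
proof -
  have "degree (pCons 0 p) \<le> Suc (degree p)" by (rule degree_pCons_le)
  then have "peval (pCons 0 p) M w = (\<lambda>q. \<Sum>i\<le>Suc (degree p). coeff (pCons 0 p) i * (mat_vec M ^^ i) w q)"
    by (rule peval_N)
  also have "\<dots> = (\<lambda>q. \<Sum>i\<le>degree p. coeff p i * mat_vec M ((mat_vec M ^^ i) w) q)"
    by (simp only: sum.atMost_Suc_shift) simp
  also have "\<dots> = mat_vec M (peval p M w)"
    unfolding peval_def mat_vec_sum mat_vec_scale ..
  finally show ?thesis .
qed

lemma peval_lin: "peval ([:-r, 1:] * p) M w = (\<lambda>q. mat_vec M (peval p M w) q - r * peval p M w q)"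
proof -
  have eq: "[:-r, 1:] * p = smult (-r) p + pCons 0 p" by (simp add: mult_pCons_left)
  show ?thesis unfolding eq peval_add peval_smult peval_shift by (simp add: algebra_simps)
qed

lemma peval_in:
  assumes "subsp W" "invar M W" "w \<in> W"
  shows "peval p M w \<in> W"
proof -
  have pw: "(mat_vec M ^^ i) w \<in> W" for i
    by (induction i) (use assms in \<open>auto simp: invar_def\<close>)
  show ?thesis unfolding peval_def
    by (rule subsp_sum[OF assms(1)]) (use assms(1) pw in \<open>auto simp: subsp_def\<close>)
qed

lemma eig_poly:
  assumes W: "subsp W" "invar M W" "w \<in> W" "w \<noteq> (\<lambda>_. 0)"
  shows "p \<noteq> 0 \<Longrightarrow> peval p M w = (\<lambda>_. 0) \<Longrightarrow> \<exists>u \<mu>. u \<in> W \<and> u \<noteq> (\<lambda>_. 0) \<and> mat_vec M u = (\<lambda>q. \<mu> * u q)"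
proof (induction "degree p" arbitrary: p rule: less_induct)
  case less
  show ?case
  proof (cases "degree p = 0")
    case True
    then have "peval p M w = (\<lambda>q. coeff p 0 * w q)" unfolding peval_def by simp
    moreover have "coeff p 0 \<noteq> 0" using True less.prems(1) by (metis leading_coeff_0_iff)
    ultimately have "w = (\<lambda>_. 0)" using less.prems(2) by (auto simp: fun_eq_iff)
    with W(4) show ?thesis by simp
  next
    case False
    then have "\<not> constant (poly p)" by (simp add: constant_degree)
    then obtain r where "poly p r = 0" using fundamental_theorem_of_algebra by blast
    then obtain p' where p': "p = [:-r, 1:] * p'" by (metis poly_eq_0_iff_dvd dvdE)
    have p'0: "p' \<noteq> 0" using p' less.prems(1) by auto
    have dp: "degree p = Suc (degree p')" using p'0 unfolding p' by (subst degree_mult_eq) auto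
    show ?thesis
    proof (cases "peval p' M w = (\<lambda>_. 0)")
      case True
      then show ?thesis using less.hyps[of p'] dp p'0 by simp
    next
      case False
      have "(\<lambda>q. mat_vec M (peval p' M w) q - r * peval p' M w q) = (\<lambda>_. 0)"
        using less.prems(2) unfolding p' peval_lin .
      then have "mat_vec M (peval p' M w) = (\<lambda>q. r * peval p' M w q)"
        by (auto simp: fun_eq_iff dest: fun_cong)
      then show ?thesis using False peval_in[OF W(1,2,3)] by blast
    qed
  qed
qed

lemma eig_exists:
  fixes M :: "'q::finite cmat"
  assumes W: "subsp W" "invar M W" "w \<in> W" "w \<noteq> (\<lambda>_. 0)"
  shows "\<exists>u \<mu>. u \<in> W \<and> u \<noteq> (\<lambda>_. 0) \<and> mat_vec M u = (\<lambda>q. \<mu> * u q)"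
proof -
  let ?m = "Suc CARD('q)"
  obtain c where c: "\<exists>i<?m. c i \<noteq> 0" "(\<lambda>q. \<Sum>i<?m. c i * (mat_vec M ^^ i) w q) = (\<lambda>_. 0)"
    using dep[of ?m "\<lambda>i. (mat_vec M ^^ i) w"] by auto
  define p where "p = (\<Sum>i<?m. monom (c i) i)"
  have cp: "coeff p k = (if k < ?m then c k else 0)" for k
  proof -
    have "coeff p k = (\<Sum>i<?m. if i = k then c i else 0)"
      unfolding p_def coeff_sum coeff_monom by simp
    also have "\<dots> = (if k < ?m then c k else 0)" by (simp add: sum.delta)
    finally show ?thesis .
  qed
  have dp: "degree p \<le> CARD('q)" by (rule degree_le) (simp add: cp)
  have "p \<noteq> 0" using c(1) cp by (metis coeff_0)
  moreover have "peval p M w = (\<lambda>_. 0)"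
    unfolding peval_N[OF dp] using c(2) by (simp add: cp lessThan_Suc_atMost[symmetric])
  ultimately show ?thesis using eig_poly[OF W] by blast
qed



lemma mat_vec_zero: "mat_vec M (\<lambda>_. 0) = (\<lambda>_. 0)"
  unfolding mat_vec_def by simp

lemma cinner_zero_right: "cinner u (\<lambda>_. 0) = 0"
  unfolding cinner_def by simp

lemma adjoint_adjoint: "Defs.adjoint (Defs.adjoint M) = M"
  unfolding Defs.adjoint_def by simp

lemma unitary_eig_cinner:
  assumes U: "unitary_mat U" and ev: "mat_vec U e = (\<lambda>q. l * e q)" and e0: "cinner e e \<noteq> 0"
  shows "cinner e (mat_vec U x) = l * cinner e x"
proof -
  have UU: "mat_vec (Defs.adjoint U) (mat_vec U v) = v" for v
    using U unfolding unitary_mat_def by (simp add: mat_vec_mult[symmetric] mat_vec_id)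
  have 1: "(\<lambda>q. l * mat_vec (Defs.adjoint U) e q) = e"
    using UU[of e] unfolding ev mat_vec_scale .
  have "cinner e e = cinner (mat_vec U e) (mat_vec U e)"
    using cinner_adjoint[of "Defs.adjoint U" e "mat_vec U e"] by (simp add: adjoint_adjoint UU)
  also have "\<dots> = cnj l * l * cinner e e" unfolding ev cinner_scale_left cinner_scale_right by simp
  finally have ll: "cnj l * l = 1" using e0
    by (metis mult_cancel_right1)
  have 2: "mat_vec (Defs.adjoint U) e = (\<lambda>q. cnj l * e q)"
  proof -
    have "(\<lambda>q. cnj l * e q) = (\<lambda>q. cnj l * (l * mat_vec (Defs.adjoint U) e q))"
      using 1 by (metis (no_types))
    also have "\<dots> = mat_vec (Defs.adjoint U) e" using ll by (simp add: mult.assoc[symmetric])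
    finally show ?thesis by simp
  qed
  have "cinner e (mat_vec U x) = cinner (mat_vec (Defs.adjoint U) e) x" by (rule cinner_adjoint[symmetric])
  also have "\<dots> = l * cinner e x" unfolding 2 cinner_scale_left by simp
  finally show ?thesis .
qed

lemma joint_step:
  fixes U :: "nat \<Rightarrow> 'q::finite cmat"
  assumes comm: "\<And>j k. j \<in> {1..K} \<Longrightarrow> k \<in> {1..K} \<Longrightarrow> mat_mult (U j) (U k) = mat_mult (U k) (U j)"
    and W: "subsp W" "\<forall>j\<in>{1..K}. invar (U j) W" "w \<in> W" "w \<noteq> (\<lambda>_. 0)"
  shows "J \<le> K \<Longrightarrow> \<exists>W' \<mu>. W' \<subseteq> W \<and> subsp W' \<and> (\<forall>j\<in>{1..K}. invar (U j) W') \<and>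
           (\<exists>w'\<in>W'. w' \<noteq> (\<lambda>_. 0)) \<and> (\<forall>j\<in>{1..J}. \<forall>x\<in>W'. mat_vec (U j) x = (\<lambda>q. \<mu> j * x q))"
proof (induction J)
  case 0
  then show ?case using W by (intro exI[of _ W]) auto
next
  case (Suc J)
  then obtain W' \<mu> where W': "W' \<subseteq> W" "subsp W'" "\<forall>j\<in>{1..K}. invar (U j) W'"
    "\<exists>w'\<in>W'. w' \<noteq> (\<lambda>_. 0)" "\<forall>j\<in>{1..J}. \<forall>x\<in>W'. mat_vec (U j) x = (\<lambda>q. \<mu> j * x q)"
    by auto
  have SJ: "Suc J \<in> {1..K}" using Suc.prems by auto
  obtain w' where w': "w' \<in> W'" "w' \<noteq> (\<lambda>_. 0)" using W'(4) by blast
  obtain u \<nu> where u: "u \<in> W'" "u \<noteq> (\<lambda>_. 0)" "mat_vec (U (Suc J)) u = (\<lambda>q. \<nu> * u q)"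
    using eig_exists[OF W'(2) _ w'] W'(3) SJ by blast
  define W'' where "W'' = {x\<in>W'. mat_vec (U (Suc J)) x = (\<lambda>q. \<nu> * x q)}"
  have "subsp W''"
    using W'(2) unfolding W''_def subsp_def
    by (auto simp: mat_vec_zero mat_vec_add mat_vec_scale algebra_simps)
  moreover have "\<forall>j\<in>{1..K}. invar (U j) W''"
  proof (intro ballI)
    fix j assume j: "j \<in> {1..K}"
    show "invar (U j) W''" unfolding invar_def
    proof
      fix x assume x: "x \<in> W''"
      have "mat_vec (U (Suc J)) (mat_vec (U j) x) = mat_vec (U j) (mat_vec (U (Suc J)) x)"
        using comm[OF SJ j] by (metis mat_vec_mult)
      also have "\<dots> = (\<lambda>q. \<nu> * mat_vec (U j) x q)" using x unfolding W''_def by (simp add: mat_vec_scale)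
      finally show "mat_vec (U j) x \<in> W''"
        using x W'(3) j unfolding W''_def invar_def by auto
    qed
  qed
  moreover have "\<exists>w'\<in>W''. w' \<noteq> (\<lambda>_. 0)" using u unfolding W''_def by auto
  moreover have "\<forall>j\<in>{1..Suc J}. \<forall>x\<in>W''. mat_vec (U j) x = (\<lambda>q. (\<mu>(Suc J := \<nu>)) j * x q)"
    using W'(5) unfolding W''_def by (auto simp: le_Suc_eq)
  moreover have "W'' \<subseteq> W" using W'(1) unfolding W''_def by auto
  ultimately show ?case by blast
qed

lemma joint_vec:
  fixes U :: "nat \<Rightarrow> 'q::finite cmat"
  assumes comm: "\<And>j k. j \<in> {1..K} \<Longrightarrow> k \<in> {1..K} \<Longrightarrow> mat_mult (U j) (U k) = mat_mult (U k) (U j)"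
    and W: "subsp W" "\<forall>j\<in>{1..K}. invar (U j) W" "w \<in> W" "w \<noteq> (\<lambda>_. 0)"
  shows "\<exists>u \<mu>. u \<in> W \<and> u \<noteq> (\<lambda>_. 0) \<and> (\<forall>j\<in>{1..K}. mat_vec (U j) u = (\<lambda>q. \<mu> j * u q))"
  using joint_step[OF comm W, of K] by blast

definition joint_eig :: "nat \<Rightarrow> (nat \<Rightarrow> 'q::finite cmat) \<Rightarrow> nat \<Rightarrow> (nat \<Rightarrow> 'q \<Rightarrow> complex) \<Rightarrow> (nat \<Rightarrow> nat \<Rightarrow> complex) \<Rightarrow> bool" where
  "joint_eig K U m e lam \<longleftrightarrow> (\<forall>j\<in>{1..K}. \<forall>k<m. mat_vec (U j) (e k) = (\<lambda>q. lam j k * e k q))"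

lemma joint_basis:
  fixes U :: "nat \<Rightarrow> 'q::finite cmat"
  assumes unit: "\<And>j. j \<in> {1..K} \<Longrightarrow> unitary_mat (U j)"
    and comm: "\<And>j k. j \<in> {1..K} \<Longrightarrow> k \<in> {1..K} \<Longrightarrow> mat_mult (U j) (U k) = mat_mult (U k) (U j)"
  shows "\<exists>m e lam. orthonormal m e \<and> joint_eig K U m e lam \<and> (\<forall>x. (\<forall>k<m. cinner (e k) x = 0) \<longrightarrow> x = (\<lambda>_. 0))"
proof -
  define S where "S = {m. \<exists>e lam. orthonormal m (e :: nat \<Rightarrow> 'q \<Rightarrow> complex) \<and> joint_eig K U m e lam}"
  have "0 \<in> S" unfolding S_def orthonormal_def joint_eig_def by auto
  have Sb: "S \<subseteq> {..CARD('q)}" unfolding S_def using orthonormal_card by auto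
  then have finS: "finite S" by (rule finite_subset) simp
  define m where "m = Max S"
  have "m \<in> S" unfolding m_def using finS \<open>0 \<in> S\<close> by (intro Max_in) auto
  then obtain e lam where e: "orthonormal m e" "joint_eig K U m e lam" unfolding S_def by auto
  have compl: "x = (\<lambda>_. 0)" if x: "\<forall>k<m. cinner (e k) x = 0" for x
  proof (rule ccontr)
    assume x0: "x \<noteq> (\<lambda>_. 0)"
    define W where "W = {x. \<forall>k<m. cinner (e k) x = 0}"
    have "subsp W" unfolding W_def subsp_def by (simp add: cinner_zero_right cinner_add_right cinner_scale_right)
    moreover have "\<forall>j\<in>{1..K}. invar (U j) W"
    proof (intro ballI)
      fix j assume j: "j \<in> {1..K}"
      have "cinner (e k) (mat_vec (U j) y) = lam j k * cinner (e k) y" if "k < m" for k y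
      proof (rule unitary_eig_cinner[OF unit[OF j]])
        show "mat_vec (U j) (e k) = (\<lambda>q. lam j k * e k q)" using e(2) j that unfolding joint_eig_def by auto
        show "cinner (e k) (e k) \<noteq> 0" using e(1) that unfolding orthonormal_def by auto
      qed
      then show "invar (U j) W" unfolding invar_def W_def by auto
    qed
    moreover have "x \<in> W" using x unfolding W_def by auto
    ultimately obtain u \<mu> where u: "u \<in> W" "u \<noteq> (\<lambda>_. 0)" "\<forall>j\<in>{1..K}. mat_vec (U j) u = (\<lambda>q. \<mu> j * u q)"
      using joint_vec[where K=K and U=U and W=W and w=x, OF comm] x0 by blast
    define s where "s = (\<Sum>i\<in>UNIV. (cmod (u i))\<^sup>2)"
    have cu: "cinner u u = of_real s" unfolding s_def by (rule cinner_self)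
    have s0: "s \<noteq> 0" using u(2) cinner_self_eq_0[of u] cu by (metis of_real_0)
    have s1: "s \<ge> 0" unfolding s_def by (simp add: sum_nonneg)
    define c where "c = complex_of_real (1 / sqrt s)"
    define v where "v = (\<lambda>q. c * u q)"
    have vv: "cinner v v = 1"
    proof -
      have "cinner v v = cnj c * c * of_real s" unfolding v_def cinner_scale_left cinner_scale_right cinner_self s_def by simp
      also have "\<dots> = 1" using s0 s1 unfolding c_def
        by (simp add: of_real_mult[symmetric] del: of_real_mult)
      finally show ?thesis .
    qed
    have ve: "cinner (e k) v = 0" if "k < m" for k
      using u(1) that unfolding W_def v_def by (simp add: cinner_scale_right)
    have ev: "cinner v (e k) = 0" if "k < m" for k
      using ve[OF that] cinner_cnj[of "e k" v] by simp
    define e' where "e' = e(m := v)"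
    define lam' where "lam' = (\<lambda>j. (lam j)(m := \<mu> j))"
    have "orthonormal (Suc m) e'"
      using e(1) vv ve ev unfolding orthonormal_def e'_def by (auto simp: less_Suc_eq)
    moreover have "joint_eig K U (Suc m) e' lam'"
      using e(2) u(3) unfolding joint_eig_def e'_def lam'_def v_def
      by (auto simp: less_Suc_eq mat_vec_scale algebra_simps)
    ultimately have "Suc m \<in> S" unfolding S_def by blast
    then show False using finS unfolding m_def by (metis Max_ge Suc_n_not_le_n)
  qed
  show ?thesis using e compl by blast
qed



lemma mat_vec_col: "mat_vec M (\<lambda>J. id_mat J K) = (\<lambda>J. M J K)"
  unfolding mat_vec_def id_mat_def by (simp add: fun_eq_iff if_distrib[where f="\<lambda>c. _ * c"] cong: if_cong)

lemma mat_mult_as_vec: "mat_mult A B = (\<lambda>I K. mat_vec A (\<lambda>J. B J K) I)"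
  unfolding mat_mult_def mat_vec_def by simp

definition refl_mat :: "nat \<Rightarrow> (nat \<Rightarrow> 'i::finite \<Rightarrow> complex) \<Rightarrow> 'i cmat" where
  "refl_mat m w = (\<lambda>I J. id_mat I J - (\<Sum>k<m. 2 * w k I * cnj (w k J) / cinner (w k) (w k)))"

definition refl_P :: "nat \<Rightarrow> (nat \<Rightarrow> 'i::finite \<Rightarrow> complex) \<Rightarrow> ('i \<Rightarrow> complex) \<Rightarrow> ('i \<Rightarrow> complex)" where
  "refl_P m w v = (\<lambda>I. \<Sum>k<m. 2 * w k I * cinner (w k) v / cinner (w k) (w k))"

lemma refl_mat_vec: "mat_vec (refl_mat m w) v = (\<lambda>I. v I - refl_P m w v I)"
proof (rule ext)
  fix I
  have "mat_vec (refl_mat m w) v I = (\<Sum>J\<in>UNIV. id_mat I J * v J) -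
      (\<Sum>J\<in>UNIV. \<Sum>k<m. 2 * w k I * cnj (w k J) * v J / cinner (w k) (w k))"
    unfolding mat_vec_def refl_mat_def by (simp add: left_diff_distrib sum_subtractf sum_distrib_right)
  also have "(\<Sum>J\<in>UNIV. id_mat I J * v J) = v I" using mat_vec_id[of v] unfolding mat_vec_def by metis
  also have "(\<Sum>J\<in>UNIV. \<Sum>k<m. 2 * w k I * cnj (w k J) * v J / cinner (w k) (w k)) = refl_P m w v I"
    unfolding refl_P_def cinner_def
    by (subst sum.swap) (simp add: sum_distrib_left sum_divide_distrib mult.assoc)
  finally show "mat_vec (refl_mat m w) v I = v I - refl_P m w v I" .
qed

lemma refl_P_alt: "refl_P m w v = (\<lambda>I. \<Sum>k<m. (2 * cinner (w k) v / cinner (w k) (w k)) * w k I)"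
  unfolding refl_P_def by (simp add: ac_simps)

lemma cinner_refl_P:
  assumes orth: "\<forall>k<m. \<forall>l<m. k \<noteq> l \<longrightarrow> cinner (w k) (w l) = 0" and l: "l < m"
  shows "cinner (w l) (refl_P m w v) = 2 * cinner (w l) v"
proof -
  have "cinner (w l) (refl_P m w v) = (\<Sum>k<m. (2 * cinner (w k) v / cinner (w k) (w k)) * cinner (w l) (w k))"
    by (simp only: refl_P_alt cinner_sum_right cinner_scale_right)
  also have "\<dots> = (\<Sum>k<m. 2 * cinner (w l) (w k) * cinner (w k) v / cinner (w k) (w k))"
    by (simp add: ac_simps)
  also have "\<dots> = (\<Sum>k<m. if k = l then 2 * cinner (w l) (w l) * cinner (w l) v / cinner (w l) (w l) else 0)"
    using orth l by (intro sum.cong refl) auto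
  also have "\<dots> = 2 * cinner (w l) (w l) * cinner (w l) v / cinner (w l) (w l)" using l by simp
  also have "\<dots> = 2 * cinner (w l) v"
  proof (cases "cinner (w l) (w l) = 0")
    case True
    then have "w l = (\<lambda>_. 0)" by (simp add: cinner_self_eq_0)
    then show ?thesis using True by (simp add: cinner_def)
  qed simp
  finally show ?thesis .
qed

lemma refl_P_P:
  assumes orth: "\<forall>k<m. \<forall>l<m. k \<noteq> l \<longrightarrow> cinner (w k) (w l) = 0"
  shows "refl_P m w (refl_P m w v) = (\<lambda>I. 2 * refl_P m w v I)"
proof -
  have "refl_P m w (refl_P m w v) = (\<lambda>I. \<Sum>k<m. (2 * cinner (w k) (refl_P m w v) / cinner (w k) (w k)) * w k I)"
    by (rule refl_P_alt)
  also have "\<dots> = (\<lambda>I. \<Sum>k<m. (2 * (2 * cinner (w k) v) / cinner (w k) (w k)) * w k I)"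
    by (intro ext sum.cong refl) (simp add: cinner_refl_P[OF orth])
  also have "\<dots> = (\<lambda>I. 2 * refl_P m w v I)"
    unfolding refl_P_alt[of m w v] by (simp add: sum_distrib_left ac_simps)
  finally show ?thesis .
qed

lemma refl_P_diff: "refl_P m w (\<lambda>I. v I - u I) = (\<lambda>I. refl_P m w v I - refl_P m w u I)"
proof (rule ext)
  fix I
  have "refl_P m w (\<lambda>I. v I - u I) I = (\<Sum>k<m. (2 * cinner (w k) v / cinner (w k) (w k)) * w k I - (2 * cinner (w k) u / cinner (w k) (w k)) * w k I)"
    unfolding refl_P_alt cinner_diff_right by (intro sum.cong refl) (simp add: right_diff_distrib diff_divide_distrib left_diff_distrib)
  then show "refl_P m w (\<lambda>I. v I - u I) I = refl_P m w v I - refl_P m w u I"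
    unfolding sum_subtractf refl_P_alt[of m w v] refl_P_alt[of m w u] .
qed

lemma refl_mat_invol:
  assumes orth: "\<forall>k<m. \<forall>l<m. k \<noteq> l \<longrightarrow> cinner (w k) (w l) = 0"
  shows "mat_vec (refl_mat m w) (mat_vec (refl_mat m w) v) = v"
  unfolding refl_mat_vec refl_P_diff refl_P_P[OF orth] by simp

lemma refl_mat_adjoint: "Defs.adjoint (refl_mat m w) = refl_mat m w"
proof (intro ext)
  fix I J
  have "cnj (refl_mat m w J I) = id_mat I J - (\<Sum>k<m. 2 * cnj (w k J) * w k I / cinner (w k) (w k))"
    unfolding refl_mat_def id_mat_def by (simp add: cnj_sum cinner_cnj)
  also have "\<dots> = refl_mat m w I J"
    unfolding refl_mat_def id_mat_def by (intro arg_cong2[where f="(-)"] sum.cong refl) auto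
  finally show "Defs.adjoint (refl_mat m w) I J = refl_mat m w I J" unfolding Defs.adjoint_def .
qed

lemma refl_mat_unitary:
  assumes orth: "\<forall>k<m. \<forall>l<m. k \<noteq> l \<longrightarrow> cinner (w k) (w l) = 0"
  shows "unitary_mat (refl_mat m w)"
proof -
  have "mat_mult (refl_mat m w) (refl_mat m w) = (\<lambda>I K. mat_vec (refl_mat m w) (mat_vec (refl_mat m w) (\<lambda>J. id_mat J K)) I)"
    unfolding mat_mult_as_vec mat_vec_col ..
  also have "\<dots> = id_mat" unfolding refl_mat_invol[OF orth] by simp
  finally show ?thesis unfolding unitary_mat_def refl_mat_adjoint by simp
qed



lemma expansion:
  assumes on: "orthonormal m e" and compl: "\<forall>x. (\<forall>k<m. cinner (e k) x = 0) \<longrightarrow> x = (\<lambda>_. 0)"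
  shows "x = (\<lambda>q. \<Sum>k<m. cinner (e k) x * e k q)"
proof -
  define r where "r = (\<lambda>q. x q - (\<Sum>k<m. cinner (e k) x * e k q))"
  have "cinner (e l) r = 0" if "l < m" for l
    unfolding r_def cinner_diff_right cinner_comb_basis[OF on that] by simp
  then have "r = (\<lambda>_. 0)" using compl by blast
  then show ?thesis unfolding r_def by (auto simp: fun_eq_iff dest: fun_cong)
qed

lemma parseval:
  assumes on: "orthonormal m e"
  shows "cinner (\<lambda>q. \<Sum>k<m. c k * e k q) (\<lambda>q. \<Sum>k<m. c k * e k q) = (\<Sum>k<m. cnj (c k) * c k)"
  unfolding cinner_sum_left cinner_scale_left by (intro sum.cong refl) (simp add: cinner_comb_basis[OF on])

lemma cinner_tensor_pair:
  fixes f f' :: "'q::finite \<Rightarrow> complex" and g g' :: "'a::finite \<Rightarrow> complex"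
  shows "cinner (\<lambda>z. tensor_vec f g z - tensor_vec f2 g2 z) (\<lambda>z. tensor_vec f' g' z - tensor_vec f2' g2' z) =
     cinner f f' * cinner g g' - cinner f f2' * cinner g g2' - cinner f2 f' * cinner g2 g' + cinner f2 f2' * cinner g2 g2'"
  unfolding cinner_diff_left cinner_diff_right cinner_tensor by simp

lemma ph_props:
  fixes z :: complex
  defines "p \<equiv> (if z = 0 then 1 else z / of_real (cmod z))"
  shows "cnj p * p = 1" and "p * cnj z = of_real (cmod z)"
proof -
  show "cnj p * p = 1"
  proof (cases "z = 0")
    case False
    have "cnj z * z = of_real ((cmod z)\<^sup>2)" by (metis complex_norm_square mult.commute)
    then show ?thesis using False unfolding p_def by (simp add: power2_eq_square)
  qed (simp add: p_def)
  show "p * cnj z = of_real (cmod z)"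
  proof (cases "z = 0")
    case False
    have "z * cnj z = of_real ((cmod z)\<^sup>2)" by (metis complex_norm_square)
    then show ?thesis using False unfolding p_def by (simp add: power2_eq_square)
  qed (simp add: p_def)
qed

no_notation vec_lambda (binder \<open>\<chi>\<close> 10)

theorem theorem2:
  fixes U :: "nat \<Rightarrow> 'q::finite cmat" and K :: nat
    and \<psi> :: "'q \<times> 'a::finite \<Rightarrow> complex"
  assumes dims: "card (UNIV :: 'q set) \<le> card (UNIV :: 'a set)"
    and unit: "\<And>j. j \<in> {1..K} \<Longrightarrow> unitary_mat (U j)"
    and comm: "\<And>j k. j \<in> {1..K} \<Longrightarrow> k \<in> {1..K} \<Longrightarrow> mat_mult (U j) (U k) = mat_mult (U k) (U j)"
    and psi: "unit_vector \<psi>"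
  shows "\<exists>(\<xi> :: 'q \<Rightarrow> complex) (\<chi> :: 'a \<Rightarrow> complex) (V :: ('q \<times> 'a) cmat).
           unit_vector \<xi> \<and> unit_vector \<chi> \<and> unitary_mat V \<and>
           (\<forall>j\<in>{1..K}. mat_vec V (mat_vec (tensor_mat (U j) id_mat) (tensor_vec \<xi> \<chi>))
                        = mat_vec (tensor_mat (U j) id_mat) \<psi>)"
proof -
  obtain m e lam where on: "orthonormal m e" and je: "joint_eig K U m e lam"
    and compl: "\<forall>x. (\<forall>k<m. cinner (e k) x = 0) \<longrightarrow> x = (\<lambda>_. 0)"
    using joint_basis[where K=K and U=U, OF unit comm] by blast
  have ee: "cinner (e k) (e l) = (if k = l then 1 else 0)" if "k < m" "l < m" for k l
    using on that unfolding orthonormal_def by auto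
  obtain b0 :: 'a where True by simp
  define a where "a k b = cinner (e k) (\<lambda>q. \<psi> (q, b))" for k b
  define na where "na k = sqrt (\<Sum>b\<in>UNIV. (cmod (a k b))\<^sup>2)" for k
  define ph where "ph z = (if z = 0 then 1 else z / of_real (cmod z))" for z :: complex
  define t where "t k = of_real (na k) * ph (a k b0)" for k
  define \<xi> where "\<xi> = (\<lambda>q. \<Sum>k<m. t k * e k q)"
  define \<chi> where "\<chi> = (\<lambda>b. if b = b0 then 1 else (0::complex))"
  define x where "x k = tensor_vec (\<lambda>q. t k * e k q) \<chi>" for k
  define y where "y k = tensor_vec (e k) (a k)" for k
  define w where "w k = (\<lambda>z. x k z - y k z)" for k
  define V where "V = refl_mat m w"
  have psi_exp: "\<psi> (q, b) = (\<Sum>k<m. a k b * e k q)" for q b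
    using fun_cong[OF expansion[OF on compl, of "\<lambda>q. \<psi> (q, b)"], of q] unfolding a_def by simp
  have chichi: "cinner \<chi> \<chi> = 1" unfolding \<chi>_def cinner_def by (simp add: if_distrib cong: if_cong)
  have achi: "cinner (a k) \<chi> = cnj (a k b0)" for k
    unfolding \<chi>_def cinner_def by (simp add: if_distrib[where f="\<lambda>c. _ * c"] cong: if_cong)
  have aa: "cinner (a k) (a k) = of_real ((na k)\<^sup>2)" for k
    unfolding na_def cinner_self by (simp add: sum_nonneg)
  have tt: "cnj (t k) * t k = of_real ((na k)\<^sup>2)" for k
  proof -
    have "cnj (t k) * t k = of_real (na k) * of_real (na k) * (cnj (ph (a k b0)) * ph (a k b0))"
      unfolding t_def by (simp add: ac_simps)
    also have "cnj (ph (a k b0)) * ph (a k b0) = 1" unfolding ph_def by (rule ph_props(1))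
    finally show ?thesis by (simp add: power2_eq_square)
  qed
  have ta: "t k * cnj (a k b0) = of_real (na k * cmod (a k b0))" for k
  proof -
    have "ph (a k b0) * cnj (a k b0) = of_real (cmod (a k b0))" unfolding ph_def by (rule ph_props(2))
    then show ?thesis unfolding t_def by (simp add: mult.assoc)
  qed
  have ete: "cinner (\<lambda>q. c * e k q) (\<lambda>q. d * e l q) = (if k = l then cnj c * d else 0)" if "k < m" "l < m" for c d k l
    unfolding cinner_scale_left cinner_scale_right ee[OF that] by simp
  have ete1: "cinner (e k) (\<lambda>q. d * e l q) = (if k = l then d else 0)" if "k < m" "l < m" for d k l
    unfolding cinner_scale_right ee[OF that] by simp
  have ete2: "cinner (\<lambda>q. c * e k q) (e l) = (if k = l then cnj c else 0)" if "k < m" "l < m" for c k l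
    unfolding cinner_scale_left ee[OF that] by simp
  have orth: "\<forall>k<m. \<forall>l<m. k \<noteq> l \<longrightarrow> cinner (w k) (w l) = 0"
  proof (intro allI impI)
    fix k l assume kl: "k < m" "l < m" "k \<noteq> l"
    show "cinner (w k) (w l) = 0"
      unfolding w_def x_def y_def cinner_tensor_pair
      using kl by (simp add: ete ete1 ete2 ee)
  qed
  have wx: "cinner (w l) (x k) = 0" if "l < m" "k < m" "l \<noteq> k" for l k
    unfolding w_def x_def y_def cinner_diff_left cinner_tensor
    using that by (simp add: ete ete1 ete2 ee)
  have xx: "cinner (x k) (x k) = cinner (y k) (y k)" if "k < m" for k
    unfolding x_def y_def cinner_tensor using that
    by (simp add: ete ee chichi aa tt)
  have yx: "cinner (y k) (x k) = of_real (na k * cmod (a k b0))" if "k < m" for k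
    unfolding x_def y_def cinner_tensor using that
    by (simp add: ete1 achi ta)
  have xy: "cinner (x k) (y k) = of_real (na k * cmod (a k b0))" if "k < m" for k
    using yx[OF that] cinner_cnj[of "y k" "x k"] by simp
  have nw: "cinner (w k) (w k) = 2 * cinner (w k) (x k)" if "k < m" for k
    unfolding w_def cinner_diff_left cinner_diff_right using xx[OF that] yx[OF that] xy[OF that]
    by (simp add: algebra_simps)
  have Vx: "mat_vec V (x k) = y k" if k: "k < m" for k
  proof -
    have "refl_P m w (x k) = (\<lambda>I. \<Sum>l<m. (2 * cinner (w l) (x k) / cinner (w l) (w l)) * w l I)"
      by (rule refl_P_alt)
    also have "\<dots> = (\<lambda>I. \<Sum>l<m. if l = k then (2 * cinner (w k) (x k) / cinner (w k) (w k)) * w k I else 0)"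
      using wx k by (intro ext sum.cong refl) auto
    also have "\<dots> = (\<lambda>I. (2 * cinner (w k) (x k) / cinner (w k) (w k)) * w k I)"
      using k by simp
    also have "\<dots> = w k"
    proof (cases "cinner (w k) (w k) = 0")
      case True
      then have "w k = (\<lambda>_. 0)" by (simp add: cinner_self_eq_0)
      then show ?thesis by simp
    next
      case False
      then show ?thesis unfolding nw[OF k, symmetric] by simp
    qed
    finally show ?thesis unfolding V_def refl_mat_vec w_def by simp
  qed
  have Ux: "mat_vec (tensor_mat (U j) id_mat) (tensor_vec \<xi> \<chi>) = (\<lambda>z. \<Sum>k<m. lam j k * x k z)"
    if j: "j \<in> {1..K}" for j
  proof -
    have Ue: "mat_vec (U j) (e k) = (\<lambda>q. lam j k * e k q)" if "k < m" for k
      using je j that unfolding joint_eig_def by auto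
    have "mat_vec (U j) (\<lambda>q'. \<xi> q' * \<chi> b) = (\<lambda>q. \<Sum>k<m. lam j k * (t k * e k q * \<chi> b))" for b
    proof -
      have "(\<lambda>q'. \<xi> q' * \<chi> b) = (\<lambda>q'. \<Sum>k<m. (t k * \<chi> b) * e k q')"
        unfolding \<xi>_def by (simp add: sum_distrib_right sum_distrib_left ac_simps)
      then have "mat_vec (U j) (\<lambda>q'. \<xi> q' * \<chi> b) = (\<lambda>q. \<Sum>k<m. (t k * \<chi> b) * mat_vec (U j) (e k) q)"
        by (simp add: mat_vec_sum mat_vec_scale)
      also have "\<dots> = (\<lambda>q. \<Sum>k<m. lam j k * (t k * e k q * \<chi> b))"
        by (intro ext sum.cong refl) (simp add: Ue ac_simps)
      finally show ?thesis .
    qed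
    then show ?thesis
      unfolding mat_vec_tensor_id x_def by (auto simp: fun_eq_iff tensor_vec_def)
  qed
  have Upsi: "mat_vec (tensor_mat (U j) id_mat) \<psi> = (\<lambda>z. \<Sum>k<m. lam j k * y k z)"
    if j: "j \<in> {1..K}" for j
  proof -
    have Ue: "mat_vec (U j) (e k) = (\<lambda>q. lam j k * e k q)" if "k < m" for k
      using je j that unfolding joint_eig_def by auto
    have "mat_vec (U j) (\<lambda>q'. \<psi> (q', b)) = (\<lambda>q. \<Sum>k<m. lam j k * (e k q * a k b))" for b
    proof -
      have "(\<lambda>q'. \<psi> (q', b)) = (\<lambda>q'. \<Sum>k<m. a k b * e k q')"
        using psi_exp by simp
      then have "mat_vec (U j) (\<lambda>q'. \<psi> (q', b)) = (\<lambda>q. \<Sum>k<m. a k b * mat_vec (U j) (e k) q)"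
        by (simp add: mat_vec_sum mat_vec_scale)
      also have "\<dots> = (\<lambda>q. \<Sum>k<m. lam j k * (e k q * a k b))"
        by (intro ext sum.cong refl) (simp add: Ue ac_simps)
      finally show ?thesis .
    qed
    then show ?thesis
      unfolding mat_vec_tensor_id y_def by (auto simp: fun_eq_iff tensor_vec_def)
  qed
  have main: "mat_vec V (mat_vec (tensor_mat (U j) id_mat) (tensor_vec \<xi> \<chi>)) = mat_vec (tensor_mat (U j) id_mat) \<psi>"
    if j: "j \<in> {1..K}" for j
  proof -
    have "mat_vec V (mat_vec (tensor_mat (U j) id_mat) (tensor_vec \<xi> \<chi>)) = (\<lambda>z. \<Sum>k<m. lam j k * mat_vec V (x k) z)"
      unfolding Ux[OF j] by (simp add: mat_vec_sum mat_vec_scale)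
    also have "\<dots> = (\<lambda>z. \<Sum>k<m. lam j k * y k z)"
      by (intro ext sum.cong refl) (simp add: Vx)
    finally show ?thesis using Upsi[OF j] by simp
  qed
  have "unitary_mat V" unfolding V_def by (rule refl_mat_unitary[OF orth])
  moreover have "unit_vector \<chi>" unfolding unit_vector_cinner by (rule chichi)
  moreover have "unit_vector \<xi>"
  proof -
    have "cinner \<xi> \<xi> = (\<Sum>k<m. of_real ((na k)\<^sup>2))"
      unfolding \<xi>_def parseval[OF on] tt ..
    also have "\<dots> = (\<Sum>k<m. cinner (a k) (a k))" by (simp add: aa)
    also have "\<dots> = cinner \<psi> \<psi>"
    proof -
      have "cinner \<psi> \<psi> = (\<Sum>b\<in>UNIV. cinner (\<lambda>q. \<psi> (q, b)) (\<lambda>q. \<psi> (q, b)))"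
        unfolding cinner_def sum_UNIV_prod by (rule sum.swap)
      also have "\<dots> = (\<Sum>b\<in>UNIV. \<Sum>k<m. cnj (a k b) * a k b)"
      proof (intro sum.cong refl)
        fix b
        have "(\<lambda>q. \<psi> (q, b)) = (\<lambda>q. \<Sum>k<m. a k b * e k q)" using psi_exp by simp
        then show "cinner (\<lambda>q. \<psi> (q, b)) (\<lambda>q. \<psi> (q, b)) = (\<Sum>k<m. cnj (a k b) * a k b)"
          using parseval[OF on, of "\<lambda>k. a k b"] by simp
      qed
      also have "\<dots> = (\<Sum>k<m. cinner (a k) (a k))"
        unfolding cinner_def by (rule sum.swap)
      finally show ?thesis by simp
    qed
    also have "\<dots> = 1" using psi unfolding unit_vector_cinner .
    finally show ?thesis unfolding unit_vector_cinner .
  qed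
  ultimately show ?thesis using main by blast
qed

end
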